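(* Let $q$ be a prime power and $g\ge1$ a fixed integer. Information packets are partitioned into $n$ disjoint generations each of size $g$. At each transmission (over a perfect channel) the source independently chooses one generation uniformly at random (probability $1/n$ each) and sends a linear combination of its packets with coefficient vector drawn uniformly from $GF(q)^{g}$; decoding fails after $t$ received coded packets if some generation has not yet received $g$ linearly independent coefficient vectors. Then, as $n\to\infty$, the probability of decoding failure when $t$ coded packets have been collected is greater than \[ 1-\exp\Bigl[-\frac{1}{(g-1)!}\,n(\log n)^{g-1}\exp\Bigl(-\frac{t}{n}\Bigr)\Bigr]+\mathcal{O}\Bigl(\frac{\log\log n}{\log n}\Bigr). \] *)

theory Defs
  imports "HOL-Probability.Probability_Mass_Function" "HOL-Library.Landau_Symbols"
begin

text \<open>Coefficient vectors in GF(q)^g are represented as extensional functions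
  on the index set {..<g}, with values in a finite field type 'a (|'a| = q).\<close>

definition coeff_space :: "nat \<Rightarrow> (nat \<Rightarrow> 'a::{field,finite}) set" where
  "coeff_space g = PiE {..<g} (\<lambda>_. UNIV)"

definition packet_pmf :: "nat \<Rightarrow> nat \<Rightarrow> (nat \<times> (nat \<Rightarrow> 'a::{field,finite})) pmf" where
  "packet_pmf n g = pair_pmf (pmf_of_set {..<n}) (pmf_of_set (coeff_space g))"

definition packets_pmf :: "nat \<Rightarrow> nat \<Rightarrow> nat \<Rightarrow> (nat \<times> (nat \<Rightarrow> 'a::{field,finite})) list pmf" where
  "packets_pmf n g t = replicate_pmf t (packet_pmf n g)"

definition lin_indep_vecs :: "nat \<Rightarrow> (nat \<Rightarrow> 'a::field) list \<Rightarrow> bool" where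
  "lin_indep_vecs g vs \<longleftrightarrow>
     (\<forall>c :: nat \<Rightarrow> 'a. (\<forall>k<g. (\<Sum>j<length vs. c j * (vs ! j) k) = 0) \<longrightarrow> (\<forall>j<length vs. c j = 0))"

definition gen_decodable :: "nat \<Rightarrow> nat \<Rightarrow> (nat \<times> (nat \<Rightarrow> 'a::field)) list \<Rightarrow> bool" where
  "gen_decodable g i xs \<longleftrightarrow>
     (\<exists>js. length js = g \<and> distinct js \<and> (\<forall>j\<in>set js. j < length xs \<and> fst (xs ! j) = i)
          \<and> lin_indep_vecs g (map (\<lambda>j. snd (xs ! j)) js))"

definition decoding_fails :: "nat \<Rightarrow> nat \<Rightarrow> (nat \<times> (nat \<Rightarrow> 'a::field)) list \<Rightarrow> bool" where
  "decoding_fails n g xs \<longleftrightarrow> (\<exists>i<n. \<not> gen_decodable g i xs)"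

end

theory Submission
  imports Defs "HOL-Real_Asymp.Real_Asymp"
begin


lemma map_replicate_pmf: "map_pmf (map f) (replicate_pmf t p) = replicate_pmf t (map_pmf f p)"
proof (induction t)
  case (Suc t)
  have "\<And>x. map_pmf ((#) (f x)) (replicate_pmf t (map_pmf f p)) = map_pmf (\<lambda>xa. f x # map f xa) (replicate_pmf t p)"
    by (simp add: Suc.IH[symmetric] map_pmf_comp)
  then show ?case
    by (simp add: map_bind_pmf bind_map_pmf map_pmf_def[symmetric] bind_return_pmf map_pmf_comp)
qed simp

lemma prob_bind_pmf_of_set:
  assumes "finite S" "S \<noteq> {}"
  shows "measure_pmf.prob (bind_pmf (pmf_of_set S) f) A = (\<Sum>x\<in>S. measure_pmf.prob (f x) A) / card S"
proof -
  have "emeasure (measure_pmf (bind_pmf (pmf_of_set S) f)) A = (\<Sum>x\<in>S. emeasure (measure_pmf (f x)) A) / of_nat (card S)"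
    using assms by (simp add: nn_integral_pmf_of_set)
  also have "\<dots> = ennreal ((\<Sum>x\<in>S. measure_pmf.prob (f x) A) / card S)"
    using assms by (simp add: measure_pmf.emeasure_eq_measure sum_ennreal ennreal_of_nat_eq_real_of_nat
       divide_ennreal sum_nonneg card_gt_0_iff)
  finally show ?thesis
    by (simp add: measure_pmf.emeasure_eq_measure sum_nonneg divide_nonneg_nonneg)
qed

definition cnt :: "nat \<Rightarrow> nat list \<Rightarrow> nat" where
  "cnt i ws = length (filter (\<lambda>x. x = i) ws)"

definition PP :: "nat \<Rightarrow> nat \<Rightarrow> (nat \<Rightarrow> nat) \<Rightarrow> real" where
  "PP n t r = measure_pmf.prob (replicate_pmf t (pmf_of_set {..<n})) {ws. \<forall>i<n. r i \<le> cnt i ws}"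

fun Q :: "nat \<Rightarrow> nat \<Rightarrow> nat \<Rightarrow> real" where
  "Q n 0 a = (if a = 0 then 1 else 0)"
| "Q n (Suc t) a = (1/n) * Q n t (a-1) + (1 - 1/n) * Q n t a"

lemma Q_nonneg: "n \<ge> 1 \<Longrightarrow> 0 \<le> Q n t a"
proof (induction t arbitrary: a)
  case (Suc t)
  have "1/real n \<le> 1" using Suc.prems by simp
  then show ?case using Suc by (simp add: add_nonneg_nonneg)
qed simp

lemma Q_mono: "n \<ge> 1 \<Longrightarrow> Q n t (Suc a) \<le> Q n t a"
proof (induction t arbitrary: a)
  case (Suc t)
  have h: "1/real n \<le> 1" using Suc.prems by simp
  have "Q n t a \<le> Q n t (a - 1)"
    using Suc by (cases a) auto
  then show ?case using Suc.IH[OF Suc.prems, of a] h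
    by (simp, intro add_mono divide_right_mono mult_left_mono) auto
qed simp

lemma Q_mono': "n \<ge> 1 \<Longrightarrow> Q n t a \<le> Q n t (a - 1)"
  using Q_mono[of n t "a - 1"] by (cases a) auto

lemma prod_lower:
  fixes q b :: "'b \<Rightarrow> real"
  assumes "finite I" "\<forall>i\<in>I. 0 \<le> q i \<and> 0 \<le> b i"
  shows "(\<Prod>i\<in>I. q i) + (\<Sum>i\<in>I. b i * (\<Prod>j\<in>I-{i}. q j)) \<le> (\<Prod>i\<in>I. q i + b i)"
  using assms
proof (induction I rule: finite_induct)
  case (insert a I)
  have nn: "0 \<le> (\<Prod>i\<in>I. q i)" using insert by (simp add: prod_nonneg)
  have nn2: "0 \<le> (\<Sum>i\<in>I. b i * (\<Prod>j\<in>I-{i}. q j))"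
    using insert by (auto intro!: sum_nonneg mult_nonneg_nonneg prod_nonneg)
  have e: "(\<Sum>i\<in>I. b i * (\<Prod>j\<in>insert a I-{i}. q j)) = q a * (\<Sum>i\<in>I. b i * (\<Prod>j\<in>I-{i}. q j))"
    unfolding sum_distrib_left
  proof (rule sum.cong)
    fix i assume "i \<in> I"
    then have "insert a I - {i} = insert a (I - {i})" "a \<notin> I - {i}" using insert by auto
    then show "b i * (\<Prod>j\<in>insert a I-{i}. q j) = q a * (b i * (\<Prod>j\<in>I-{i}. q j))"
      using insert by simp
  qed simp
  have "(\<Prod>i\<in>insert a I. q i) + (\<Sum>i\<in>insert a I. b i * (\<Prod>j\<in>insert a I-{i}. q j))
      = q a * ((\<Prod>i\<in>I. q i) + (\<Sum>i\<in>I. b i * (\<Prod>j\<in>I-{i}. q j))) + b a * (\<Prod>i\<in>I. q i)"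
    using insert e by (simp add: algebra_simps insert_Diff_if)
  also have "\<dots> \<le> q a * (\<Prod>i\<in>I. q i + b i) + b a * (\<Prod>i\<in>I. q i + b i)"
  proof (rule add_mono)
    show "q a * ((\<Prod>i\<in>I. q i) + (\<Sum>i\<in>I. b i * (\<Prod>j\<in>I-{i}. q j))) \<le> q a * (\<Prod>i\<in>I. q i + b i)"
      using insert by (intro mult_left_mono) auto
    show "b a * (\<Prod>i\<in>I. q i) \<le> b a * (\<Prod>i\<in>I. q i + b i)"
      using insert nn2 by (intro mult_left_mono) auto
  qed
  also have "\<dots> = (\<Prod>i\<in>insert a I. q i + b i)"
    using insert by (simp add: algebra_simps)
  finally show ?case .
qed simp

lemma replicate_Suc': "replicate_pmf (Suc t) p = bind_pmf p (\<lambda>x. map_pmf ((#) x) (replicate_pmf t p))"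
  by (simp add: map_pmf_def)

lemma cnt_Cons: "cnt j (i # ws) = cnt j ws + (if j = i then 1 else 0)"
  by (simp add: cnt_def)

lemma PP_Suc:
  assumes "n \<ge> 1"
  shows "PP n (Suc t) r = (\<Sum>i<n. PP n t (r(i := r i - 1))) / n"
proof -
  have "PP n (Suc t) r = (\<Sum>i<n. measure_pmf.prob (replicate_pmf t (pmf_of_set {..<n}))
          (((#) i) -` {ws. \<forall>j<n. r j \<le> cnt j ws})) / n"
    unfolding PP_def replicate_Suc' using assms
    by (subst prob_bind_pmf_of_set) (auto simp: lessThan_empty_iff)
  also have "\<dots> = (\<Sum>i<n. PP n t (r(i := r i - 1))) / n"
  proof -
    have "\<And>i. i < n \<Longrightarrow> ((#) i) -` {ws. \<forall>j<n. r j \<le> cnt j ws} = {ws. \<forall>j<n. (r(i := r i - 1)) j \<le> cnt j ws}"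
      by (auto simp: cnt_Cons)
    then show ?thesis unfolding PP_def by (intro arg_cong[where f="\<lambda>x. x / _"] sum.cong) auto
  qed
  finally show ?thesis .
qed

lemma PP_le:
  assumes "n \<ge> 1"
  shows "PP n t r \<le> (\<Prod>i<n. Q n t (r i))"
proof (induction t arbitrary: r)
  case 0
  show ?case
  proof (cases "\<forall>i<n. r i = 0")
    case True
    then have "(\<Prod>i<n. Q n 0 (r i)) = 1" by simp
    then show ?thesis unfolding PP_def by simp
  next
    case False
    then have "PP n 0 r = 0" unfolding PP_def by (auto simp: cnt_def)
    then show ?thesis using assms by (simp add: prod_nonneg Q_nonneg del: Q.simps)
  qed
next
  case (Suc t)
  define q where "q j = Q n t (r j)" for j
  define b where "b j = (1/n) * (Q n t (r j - 1) - q j)" for j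
  have qn: "0 \<le> q j" for j using Q_nonneg assms q_def by simp
  have bn: "0 \<le> b j" for j using Q_mono'[OF assms, of t "r j"] unfolding b_def q_def by simp
  have rem: "(\<Prod>j<n. Q n t ((r(i := r i - 1)) j)) = Q n t (r i - 1) * (\<Prod>j\<in>{..<n}-{i}. q j)" if "i < n" for i
  proof -
    have "(\<Prod>j<n. Q n t ((r(i := r i - 1)) j)) = Q n t ((r(i := r i - 1)) i) * (\<Prod>j\<in>{..<n}-{i}. Q n t ((r(i := r i - 1)) j))"
      using that by (subst prod.remove[of _ i]) auto
    also have "(\<Prod>j\<in>{..<n}-{i}. Q n t ((r(i := r i - 1)) j)) = (\<Prod>j\<in>{..<n}-{i}. q j)"
      by (rule prod.cong) (auto simp: q_def)
    finally show ?thesis by simp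
  qed
  have qi: "q i * (\<Prod>j\<in>{..<n}-{i}. q j) = (\<Prod>j<n. q j)" if "i < n" for i
    using that by (subst prod.remove[of _ i, symmetric]) auto
  have "PP n (Suc t) r = (\<Sum>i<n. PP n t (r(i := r i - 1))) / n"
    by (rule PP_Suc[OF assms])
  also have "\<dots> \<le> (\<Sum>i<n. Q n t (r i - 1) * (\<Prod>j\<in>{..<n}-{i}. q j)) / n"
  proof (intro divide_right_mono sum_mono)
    fix i assume "i \<in> {..<n}"
    then show "PP n t (r(i := r i - 1)) \<le> Q n t (r i - 1) * (\<Prod>j\<in>{..<n}-{i}. q j)"
      using Suc.IH[of "r(i := r i - 1)"] rem[of i] by (simp add: fun_upd_def)
  qed simp
  also have "(\<Sum>i<n. Q n t (r i - 1) * (\<Prod>j\<in>{..<n}-{i}. q j)) = (\<Sum>i<n. q i * (\<Prod>j\<in>{..<n}-{i}. q j) + n * (b i * (\<Prod>j\<in>{..<n}-{i}. q j)))"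
    using assms by (intro sum.cong) (auto simp: b_def algebra_simps)
  also have "\<dots> = n * (\<Prod>j<n. q j) + n * (\<Sum>i<n. b i * (\<Prod>j\<in>{..<n}-{i}. q j))"
    by (simp add: sum.distrib qi sum_distrib_left)
  also have "\<dots> / n = (\<Prod>j<n. q j) + (\<Sum>i<n. b i * (\<Prod>j\<in>{..<n}-{i}. q j))"
    using assms by (simp add: field_simps)
  also have "\<dots> \<le> (\<Prod>j<n. q j + b j)"
    using qn bn by (intro prod_lower) auto
  also have "\<dots> = (\<Prod>i<n. Q n (Suc t) (r i))"
    by (intro prod.cong) (auto simp: q_def b_def algebra_simps)
  finally show ?case .
qed

definition bterm :: "nat \<Rightarrow> nat \<Rightarrow> nat \<Rightarrow> real" where
  "bterm n t k = real (t choose k) * (1/n)^k * (1 - 1/n)^(t-k)"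

lemma Q_0: "Q n t 0 = 1"
  by (induction t) auto

lemma bterm_Suc_Suc: "bterm n (Suc t) (Suc k) = (1/n) * bterm n t k + (1 - 1/n) * bterm n t (Suc k)"
proof (cases "k < t")
  case True
  then have e2: "(1 - 1/real n) ^ (t - k) = (1 - 1/real n) * (1 - 1/real n) ^ (t - Suc k)"
    by (metis Suc_diff_Suc power_Suc)
  show ?thesis unfolding bterm_def binomial_Suc_Suc of_nat_add diff_Suc_Suc e2 power_Suc
    by (simp only: algebra_simps)
next
  case False
  then have "t choose Suc k = 0" by simp
  moreover have "t - k = 0" using False by simp
  ultimately show ?thesis unfolding bterm_def by (simp add: algebra_simps)
qed

lemma bterm_Suc_0: "bterm n (Suc t) 0 = (1 - 1/n) * bterm n t 0"
  unfolding bterm_def by simp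

lemma S_lb: "n \<ge> 1 \<Longrightarrow> a \<ge> 1 \<Longrightarrow> bterm n t (a-1) \<le> 1 - Q n t a"
proof (induction t arbitrary: a)
  case 0
  then show ?case by (cases a; cases "a - 1") (auto simp: bterm_def)
next
  case (Suc t)
  have p1: "0 \<le> 1 - 1/real n" "0 \<le> 1/real n" using Suc.prems by auto
  have e: "1 - Q n (Suc t) a = (1/n) * (1 - Q n t (a-1)) + (1 - 1/n) * (1 - Q n t a)"
    by (simp add: algebra_simps)
  show ?case
  proof (cases "a = 1")
    case True
    have "bterm n (Suc t) (a-1) = (1-1/n) * bterm n t 0" using True bterm_Suc_0 by simp
    also have "\<dots> \<le> (1-1/n) * (1 - Q n t 1)" using Suc.IH[of 1] Suc.prems p1 by (intro mult_left_mono) auto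
    also have "\<dots> = 1 - Q n (Suc t) a" using True by (simp add: Q_0 algebra_simps)
    finally show ?thesis .
  next
    case False
    then obtain k where k: "a = Suc (Suc k)" using Suc.prems by (metis Suc_le_D One_nat_def not0_implies_Suc)
    have "bterm n (Suc t) (a-1) = (1/n) * bterm n t k + (1 - 1/n) * bterm n t (Suc k)"
      using k bterm_Suc_Suc by simp
    also have "\<dots> \<le> (1/n) * (1 - Q n t (a-1)) + (1 - 1/n) * (1 - Q n t a)"
      using Suc.IH[of "Suc k"] Suc.IH[of a] Suc.prems k p1
      by (intro add_mono mult_left_mono) auto
    finally show ?thesis using e by simp
  qed
qed

lemma decodable_cnt:
  assumes "gen_decodable g i xs"
  shows "g \<le> cnt i (map fst xs)"
proof -
  obtain js where js: "length js = g" "distinct js" "\<forall>j\<in>set js. j < length xs \<and> fst (xs ! j) = i"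
    using assms unfolding gen_decodable_def by blast
  have "cnt i (map fst xs) = length (filter (\<lambda>p. fst p = i) xs)"
    by (simp add: cnt_def filter_map o_def)
  also have "\<dots> = card {j. j < length xs \<and> fst (xs ! j) = i}"
    by (rule length_filter_conv_card)
  finally have c: "cnt i (map fst xs) = card {j. j < length xs \<and> fst (xs ! j) = i}" .
  have "g = card (set js)" using js distinct_card by metis
  also have "\<dots> \<le> card {j. j < length xs \<and> fst (xs ! j) = i}"
    using js by (intro card_mono) auto
  finally show ?thesis using c by simp
qed

lemma coeff_space_ok: "finite (coeff_space g :: (nat \<Rightarrow> 'a::{field,finite}) set)" "coeff_space g \<noteq> ({} :: (nat \<Rightarrow> 'a::{field,finite}) set)"
  unfolding coeff_space_def by (auto intro!: finite_PiE simp: PiE_eq_empty_iff)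

lemma fail_ge_PP:
  assumes "n \<ge> 1"
  shows "measure_pmf.prob (packets_pmf n g t :: (nat \<times> (nat \<Rightarrow> 'a::{field,finite})) list pmf)
                        {xs. decoding_fails n g xs} \<ge> 1 - PP n t (\<lambda>_. g)"
proof -
  let ?M = "packets_pmf n g t :: (nat \<times> (nat \<Rightarrow> 'a::{field,finite})) list pmf"
  let ?A = "{xs. \<forall>i<n. g \<le> cnt i (map fst xs)}"
  have "map_pmf fst (packet_pmf n g :: (nat \<times> (nat \<Rightarrow> 'a::{field,finite})) pmf) = pmf_of_set {..<n}"
    unfolding packet_pmf_def by (rule map_fst_pair_pmf)
  then have "map_pmf (map fst) ?M = replicate_pmf t (pmf_of_set {..<n})"
    unfolding packets_pmf_def by (simp add: map_replicate_pmf)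
  moreover have "measure_pmf.prob (map_pmf (map fst) ?M) {ws. \<forall>i<n. g \<le> cnt i ws} = measure_pmf.prob ?M ?A"
    by (simp add: vimage_def)
  ultimately have pa: "measure_pmf.prob ?M ?A = PP n t (\<lambda>_. g)"
    unfolding PP_def by simp
  have "{xs. decoding_fails n g xs} \<supseteq> UNIV - ?A"
    unfolding decoding_fails_def using decodable_cnt by (auto simp: not_le)
  then have "measure_pmf.prob ?M {xs. decoding_fails n g xs} \<ge> measure_pmf.prob ?M (UNIV - ?A)"
    by (intro measure_pmf.finite_measure_mono) auto
  also have "measure_pmf.prob ?M (UNIV - ?A) = 1 - PP n t (\<lambda>_. g)"
    using pa measure_pmf.prob_compl[of ?A ?M] by simp
  finally show ?thesis by simp
qed

lemma fail_lb:
  assumes "n \<ge> 1" "g \<ge> 1" "0 \<le> s" "s \<le> 1 - Q n t g"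
  shows "measure_pmf.prob (packets_pmf n g t :: (nat \<times> (nat \<Rightarrow> 'a::{field,finite})) list pmf)
                        {xs. decoding_fails n g xs} \<ge> 1 - exp (- (real n * s))"
proof -
  have "PP n t (\<lambda>_. g) \<le> (\<Prod>i<n. Q n t g)" using PP_le[OF assms(1), of t "\<lambda>_. g"] by simp
  also have "\<dots> = Q n t g ^ n" by simp
  also have "\<dots> \<le> (1 - s) ^ n" using assms Q_nonneg[OF assms(1)] by (intro power_mono) auto
  also have "\<dots> \<le> exp (- s) ^ n" using assms Q_nonneg[OF assms(1), of t g]
    by (intro power_mono) (auto simp: exp_ge_add_one_self[of "-s", simplified])
  also have "\<dots> = exp (- (real n * s))" by (simp add: exp_of_nat_mult[symmetric])
  finally show ?thesis using fail_ge_PP[OF assms(1), where 'a='a, of t g] by simp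
qed



lemma Q_antimono: "n \<ge> 1 \<Longrightarrow> a \<le> b \<Longrightarrow> Q n t b \<le> Q n t a"
proof (induction b)
  case (Suc b)
  then show ?case using Q_mono[OF Suc.prems(1), of t b] by (cases "a = Suc b") auto
qed simp

lemma pow_lb:
  assumes "n \<ge> 2"
  shows "(1 - 1 / real n) ^ t \<ge> exp (- (real t / (real n - 1)))"
proof -
  have n1: "real n - 1 > 0" using assms by simp
  have e: "1 - 1 / real n = 1 / (1 + 1 / (real n - 1))"
    using n1 by (simp add: field_simps)
  have "(1 + 1 / (real n - 1)) ^ t \<le> exp (1 / (real n - 1)) ^ t"
    using n1 by (intro power_mono) (auto simp: exp_ge_add_one_self[of "1 / (real n - 1)", simplified add.commute])
  also have "\<dots> = exp (real t / (real n - 1))"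
    by (simp add: exp_of_nat_mult[symmetric])
  finally have h: "(1 + 1 / (real n - 1)) ^ t \<le> exp (real t / (real n - 1))" .
  have "exp (- (real t / (real n - 1))) = 1 / exp (real t / (real n - 1))"
    by (simp add: exp_minus field_simps)
  also have "\<dots> \<le> 1 / (1 + 1 / (real n - 1)) ^ t"
    using h n1 by (intro divide_left_mono) (auto intro!: mult_pos_pos zero_less_power add_pos_pos)
  also have "\<dots> = (1 - 1 / real n) ^ t" using e by (simp add: power_divide)
  finally show ?thesis .
qed

lemma binom_lb:
  assumes "k \<le> t"
  shows "(real t - real k) ^ k \<le> real (t choose k) * fact k"
proof -
  have "real (t choose k) * fact k = pochhammer (real t - real k + 1) k"
    by (simp add: binomial_gbinomial gbinomial_pochhammer')
  also have "\<dots> = (\<Prod>i\<in>{0..<k}. real t - real k + 1 + real i)"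
    by (simp add: pochhammer_prod)
  also have "\<dots> \<ge> (\<Prod>i\<in>{0..<k}. real t - real k)"
    using assms by (intro prod_mono) auto
  finally show ?thesis by simp
qed

lemma x_exp_le: "0 \<le> (x::real) \<Longrightarrow> x * exp (- x / 2) \<le> 1"
proof -
  assume x: "0 \<le> x"
  have h: "0 \<le> (x/4 - 1)^2" by simp
  have "x \<le> (1 + x/4)^2" using h unfolding power2_eq_square by (simp add: algebra_simps)
  also have "\<dots> \<le> exp (x/4) ^ 2" using x by (intro power_mono) (auto simp: exp_ge_add_one_self[of "x/4", simplified add.commute])
  also have "\<dots> = exp (x/2)" by (simp add: exp_double[symmetric] power2_eq_square mult_exp_exp)
  finally have "x \<le> exp (x/2)" .
  then show ?thesis by (simp add: exp_minus field_simps)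
qed

lemma exp_sub1_le: "0 \<le> (u::real) \<Longrightarrow> exp u - 1 \<le> u * exp u"
proof -
  assume "0 \<le> u"
  have "1 - u \<le> exp (-u)" using exp_ge_add_one_self[of "-u"] by simp
  then have "(1 - u) * exp u \<le> exp (-u) * exp u" by (intro mult_right_mono) auto
  then show ?thesis by (simp add: exp_minus field_simps)
qed



lemma bterm_nonneg: "n \<ge> 1 \<Longrightarrow> 0 \<le> bterm n t k"
  unfolding bterm_def by simp

lemma Ns1_lb:
  assumes n2: "n \<ge> 2" and g1: "g \<ge> 1" and gt: "g \<le> t" and L: "ln (real n) > 0"
  shows "real n * bterm n t (g-1) \<ge>
    ((1 / fact (g - 1)) * real n * ln (real n) ^ (g - 1) * exp (- (real t / real n))) *
    (((real t / real n - real g / real n) / ln (real n)) ^ (g - 1) * exp (- (real t / real n) / (real n - 1)))"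
proof -
  define N where "N = real n"
  define L where "L = ln N"
  define lam where "lam = real t / N"
  have N2: "N \<ge> 2" using n2 N_def by simp
  have Lp: "L > 0" using L N_def L_def by simp
  have t_eq: "real t = lam * N" using N2 lam_def by simp
  have A: "(1 - 1/N) ^ (t - (g-1)) \<ge> (1 - 1/N) ^ t"
    using N2 by (intro power_decreasing) auto
  have B: "(1 - 1/N) ^ t \<ge> exp (- lam) * exp (- lam / (N - 1))"
  proof -
    have "real t / (N - 1) = lam + lam / (N - 1)" using N2 t_eq by (simp add: field_simps)
    then have "- (real t / (N - 1)) = - lam + (- lam / (N - 1))" by simp
    then have "exp (- (real t / (N - 1))) = exp (- lam) * exp (- lam / (N - 1))"
      by (simp only: exp_add)
    then show ?thesis using pow_lb[OF n2, of t] N_def by simp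
  qed
  have C: "real (t choose (g-1)) \<ge> (real t - real (g-1)) ^ (g-1) / fact (g-1)"
    using binom_lb[of "g-1" t] gt by (simp add: field_simps)
  have D: "(real t - real (g-1)) ^ (g-1) \<ge> ((N * lam - real g)) ^ (g-1)"
  proof (rule power_mono)
    show "(N * lam - real g) \<le> real t - real (g - 1)" using N2 t_eq g1 by (simp add: field_simps)
    show "0 \<le> (N * lam - real g)" using N2 t_eq gt by (simp add: field_simps)
  qed
  have "real n * bterm n t (g-1) = N * real (t choose (g-1)) * (1/N)^(g-1) * (1 - 1/N)^(t - (g-1))"
    unfolding bterm_def N_def by simp
  also have "\<dots> \<ge> N * (((N * lam - real g)) ^ (g-1) / fact (g-1)) * (1/N)^(g-1) * (exp (- lam) * exp (- lam / (N - 1)))"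
  proof -
    have "((N * lam - real g)) ^ (g-1) / fact (g-1) \<le> real (t choose (g-1))"
      using C D by (smt (verit) divide_right_mono fact_ge_zero)
    moreover have "exp (- lam) * exp (- lam / (N - 1)) \<le> (1 - 1/N)^(t - (g-1))" using A B by simp
    moreover have "0 \<le> ((N * lam - real g)) ^ (g-1) / fact (g-1)"
      using N2 t_eq gt by (intro divide_nonneg_nonneg zero_le_power) (auto simp: field_simps)
    ultimately show ?thesis using N2
      by (intro mult_mono mult_left_mono) auto
  qed
  also have "N * (((N * lam - real g)) ^ (g-1) / fact (g-1)) * (1/N)^(g-1) * (exp (- lam) * exp (- lam / (N - 1)))
     = N * (1 / fact (g-1)) * (((N * lam - real g)) ^ (g-1) * (1/N)^(g-1)) * (exp (- lam) * exp (- lam / (N - 1)))"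
    by (simp add: algebra_simps)
  also have "((N * lam - real g)) ^ (g-1) * (1/N)^(g-1) = ((lam - real g / N) / L) ^ (g - 1) * L ^ (g-1)"
  proof -
    have "(N * lam - real g) * (1/N) = ((lam - real g / N) / L) * L" using N2 Lp by (simp add: field_simps)
    then show ?thesis by (metis power_mult_distrib)
  qed
  also have "N * (1 / fact (g-1)) * (((lam - real g / N) / L) ^ (g - 1) * L ^ (g-1)) * (exp (- lam) * exp (- lam / (N - 1)))
     = ((1 / fact (g - 1)) * N * L ^ (g - 1) * exp (- lam)) * (((lam - real g / N) / L) ^ (g - 1) * exp (- lam / (N - 1)))"
    by (simp add: algebra_simps)
  finally show ?thesis unfolding N_def L_def lam_def by simp
qed



lemma core:
  fixes n t g :: nat
  assumes g1: "g \<ge> 1" and n3: "n \<ge> 3" and ng: "real g \<le> real n"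
  and l1: "1 \<le> ln (ln (real n))"
  and c3: "ln (ln (real n)) \<le> exp (ln (real n) / 4)"
  and c5: "(ln (real n) + real g * ln (ln (real n))) / (real n - 1) \<le> ln (ln (real n)) / ln (real n)"
  and c6: "3 * real g * (ln (ln (real n)) / ln (real n)) \<le> 1/2"
  and c7: "ln (fact (g-1)) + ln (2 * 3^(g-1)) + ln (ln (ln (real n))) \<le> 2 * ln (ln (real n))"
  shows "measure_pmf.prob (packets_pmf n g t :: (nat \<times> (nat \<Rightarrow> 'a::{field,finite})) list pmf) {xs. decoding_fails n g xs}
       > 1 - exp (- (1 / fact (g - 1)) * real n * ln (real n) ^ (g - 1) * exp (- (real t / real n)))
           + (- (3 * real g + 2) * (ln (ln (real n)) / ln (real n)))"
proof -
  define N where "N = real n"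
  define L where "L = ln N"
  define l where "l = ln L"
  define d where "d = l / L"
  define lam where "lam = real t / N"
  define x where "x = (1 / fact (g - 1)) * N * L ^ (g - 1) * exp (- lam)"
  define k where "k = 3 * real g"
  define C where "C = k + 2"
  define M where "M = 2 * 3^(g-1) * l"
  have N3: "N \<ge> 3" using n3 N_def by simp
  have Lp: "L > 0" using N3 L_def by simp
  have LE: "L \<ge> exp 1" using l1 Lp unfolding N_def L_def l_def[symmetric]
    by (metis exp_le_cancel_iff exp_ln l_def L_def N_def)
  have l1': "l \<ge> 1" using l1 N_def L_def l_def by simp
  have dp: "d > 0" using l1' Lp d_def by simp
  have c6': "3 * real g * d \<le> 1/2" using c6 unfolding d_def l_def L_def N_def .
  have c5': "(L + real g * l) / (N - 1) \<le> d" using c5 unfolding d_def l_def L_def N_def .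
  have c7': "ln (fact (g-1)) + ln (2 * 3^(g-1)) + ln l \<le> 2 * l" using c7 unfolding l_def L_def N_def .
  have d6: "d \<le> 1/6"
  proof -
    have "3 * 1 * d \<le> 3 * real g * d" using g1 dp by (intro mult_right_mono) auto
    then show ?thesis using c6' by linarith
  qed
  have L6: "L \<ge> 6" using d6 l1' Lp d_def by (simp add: field_simps)
  have xnn: "x \<ge> 0" using Lp N3 x_def by simp
  have lamnn: "lam \<ge> 0" using N3 lam_def by simp
  have gN: "real g / N \<le> 1" using ng N3 N_def by simp
  have rhs: "- (1 / fact (g - 1)) * real n * ln (real n) ^ (g - 1) * exp (- (real t / real n)) = - x"
    unfolding x_def N_def L_def lam_def by simp
  have fl: "measure_pmf.prob (packets_pmf n g t :: (nat \<times> (nat \<Rightarrow> 'a::{field,finite})) list pmf) {xs. decoding_fails n g xs}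
      \<ge> 1 - exp (- (N * s))" if "0 \<le> s" "s \<le> 1 - Q n t g" for s
    using fail_lb[of n g s t] that n3 g1 N_def by simp
  have sQ0: "bterm n t 0 \<le> 1 - Q n t g"
    using S_lb[of n 1 t] Q_antimono[of n 1 g t] n3 g1 by simp
  have sQ1: "bterm n t (g-1) \<le> 1 - Q n t g"
    using S_lb[of n g t] n3 g1 by simp
  have s0nn: "0 \<le> bterm n t 0" and s1nn: "0 \<le> bterm n t (g-1)" using bterm_nonneg n3 by auto
  have big: "exp (- (N * s)) < exp (- x) + C * d" if "N * s \<ge> l" for s
  proof -
    have "exp (- (N * s)) \<le> exp (- l)" using that by simp
    also have "\<dots> = 1 / L" using Lp l_def by (simp add: exp_minus divide_inverse)
    also have "\<dots> < C * d"
    proof -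
      have "5 * 1 \<le> (3 * real g + 2) * l" using g1 l1' by (intro mult_mono) auto
      then have "1 / L < ((3 * real g + 2) * l) / L" using Lp by (intro divide_strict_right_mono) auto
      then show ?thesis unfolding C_def k_def d_def by simp
    qed
    finally have "exp (- (N * s)) < C * d" .
    then show ?thesis using exp_gt_zero[of "-x"] by linarith
  qed
  have main: "\<exists>s. 0 \<le> s \<and> s \<le> 1 - Q n t g \<and> exp (- (N * s)) < exp (- x) + C * d"
  proof (cases "lam \<le> L / 2")
    case True
    have "real t / (N - 1) = lam * (N / (N - 1))" using N3 lam_def by (simp add: field_simps)
    also have "\<dots> \<le> (L/2) * (3/2)"
      using True N3 lamnn by (intro mult_mono) (auto simp: field_simps)
    finally have tb: "real t / (N - 1) \<le> 3 * L / 4" by simp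
    have "N * bterm n t 0 = N * (1 - 1/N) ^ t" unfolding bterm_def N_def by simp
    also have "\<dots> \<ge> N * exp (- (real t / (N - 1)))" using pow_lb[of n t] n3 N3 N_def
      by (intro mult_left_mono) auto
    finally have h1: "N * bterm n t 0 \<ge> N * exp (- (real t / (N - 1)))" .
    have "exp (- (3 * L / 4)) \<le> exp (- (real t / (N - 1)))" using tb by simp
    then have "N * exp (- (3 * L / 4)) \<le> N * exp (- (real t / (N - 1)))" using N3 by (intro mult_left_mono) auto
    then have "N * bterm n t 0 \<ge> N * exp (- (3 * L / 4))" using h1 by linarith
    moreover have "N * exp (- (3 * L / 4)) = exp (L / 4)"
    proof -
      have "L/4 + 3*L/4 = L" by simp
      then have "exp (L/4) * exp (3*L/4) = exp L" by (metis exp_add)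
      also have "exp L = N" using N3 L_def by simp
      finally show ?thesis by (simp add: exp_minus field_simps)
    qed
    ultimately have "N * bterm n t 0 \<ge> l" using c3 l_def L_def N_def by simp
    then show ?thesis using big s0nn sQ0 by blast
  next
    case lamL: False
    show ?thesis
    proof (cases "x \<le> d")
      case True
      have "exp (- (N * bterm n t 0)) \<le> 1" using N3 s0nn by simp
      also have "1 < 1 - d + C * d"
      proof -
        have "2 * d \<le> C * d" using dp unfolding C_def k_def by (intro mult_right_mono) auto
        then show ?thesis using dp by linarith
      qed
      also have "1 - d \<le> exp (- x)" using True exp_ge_add_one_self[of "-x"] by simp
      finally show ?thesis using s0nn sQ0 by auto
    next
      case xd: False
      have tg: "g \<le> t"
      proof -
        have "real t = lam * N" using N3 lam_def by simp
        also have "\<dots> \<ge> (L/2) * N" using lamL N3 by (intro mult_right_mono) auto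
        finally have h: "real t \<ge> (L/2) * N" .
        have "1 * N \<le> (L/2) * N" using L6 N3 by (intro mult_right_mono) auto
        then have "real t \<ge> N" using h by linarith
        then show ?thesis using ng N_def by simp
      qed
      define \<rho> where "\<rho> = ((lam - real g / N) / L) ^ (g - 1) * exp (- lam / (N - 1))"
      have Ns1: "N * bterm n t (g-1) \<ge> x * \<rho>"
        using Ns1_lb[of n g t] n3 g1 tg Lp unfolding x_def \<rho>_def N_def L_def lam_def by simp
      have xpos: "x > 0" using xd dp by simp
      have lnx: "ln x = L + real (g-1) * l - lam - ln (fact (g-1))"
        using N3 Lp unfolding x_def l_def L_def
        by (simp add: ln_mult ln_div ln_realpow)
      show ?thesis
      proof (cases "x \<ge> M")
        case True
        have M1: "M \<ge> 1"
        proof -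
          have "(1::real) \<le> 3^(g-1)" by (rule one_le_power) simp
          then have "(1::real) \<le> 2 * 3^(g-1)" by linarith
          then have "1 * 1 \<le> (2 * 3^(g-1)) * l" using l1' by (intro mult_mono) auto
          then show ?thesis unfolding M_def by simp
        qed
        have "ln x \<ge> 0" using True M1 xpos by simp
        moreover have "real (g-1) * l \<le> real g * l" using l1' by (intro mult_right_mono) auto
        moreover have "ln (fact (g-1)) \<ge> (0::real)" by simp
        ultimately have lamU: "lam \<le> L + real g * l" using lnx by linarith
        have "lam / (N - 1) \<le> (L + real g * l) / (N - 1)" using lamU N3 by (intro divide_right_mono) auto
        then have "lam / (N - 1) \<le> d" using c5' by linarith
        then have e2: "exp (- lam / (N - 1)) \<ge> 1/2" using d6 exp_ge_add_one_self[of "- lam / (N - 1)"] by simp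
        have "(lam - real g / N) / L \<ge> 1/3" using lamL gN L6 by (simp add: field_simps)
        then have e1: "((lam - real g / N) / L) ^ (g-1) \<ge> (1/3) ^ (g-1)" by (intro power_mono) auto
        have "0 \<le> (1/3::real) ^ (g-1)" by simp
        then have "0 \<le> ((lam - real g / N) / L) ^ (g-1)" using e1 by linarith
        then have "\<rho> \<ge> (1/3) ^ (g-1) * (1/2)" unfolding \<rho>_def using e1 e2 by (intro mult_mono) auto
        then have "x * \<rho> \<ge> M * ((1/3) ^ (g-1) * (1/2))" using True M1 xnn
          by (intro mult_mono) auto
        also have "M * ((1/3) ^ (g-1) * (1/2)) = l" unfolding M_def by (simp add: power_divide)
        finally have "N * bterm n t (g-1) \<ge> l" using Ns1 by simp
        then show ?thesis using big s1nn sQ1 by blast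
      next
        case xM: False
        have lnM: "ln M = ln (2 * 3^(g-1)) + l'" if "l' = ln l" for l'
          using l1' M_def that by (simp add: ln_mult)
        have lamLo: "lam \<ge> L - 2 * l"
        proof -
          have "ln x \<le> ln M" using xM xpos by simp
          moreover have "0 \<le> real (g-1) * l" using l1' by simp
          ultimately show ?thesis using lnx lnM[OF refl] c7' by linarith
        qed
        have lamUp: "lam \<le> L + real g * l"
        proof -
          have "ln x \<ge> ln d" using xd dp by simp
          moreover have "ln d = ln l - l" using l1' Lp d_def l_def by (simp add: ln_div)
          moreover have "ln l \<ge> 0" using l1' by simp
          moreover have "ln (fact (g-1)) \<ge> (0::real)" by simp
          moreover have "real (g-1) * l \<le> real g * l - l" using g1 l1' by (simp add: of_nat_diff algebra_simps)
          ultimately show ?thesis using lnx by linarith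
        qed
        have "lam / (N - 1) \<le> (L + real g * l) / (N - 1)" using lamUp N3 by (intro divide_right_mono) auto
        then have "lam / (N - 1) \<le> d" using c5' by linarith
        then have e2: "exp (- lam / (N - 1)) \<ge> 1 - d" using exp_ge_add_one_self[of "- lam / (N - 1)"] by simp
        have "(lam - real g / N) / L \<ge> 1 - 3 * d"
        proof -
          have "lam - real g / N \<ge> L - 3 * l" using lamLo gN l1' by simp
          then have "(L - 3 * l) / L \<le> (lam - real g / N) / L" using Lp by (intro divide_right_mono) auto
          moreover have "1 - 3 * d = (L - 3 * l) / L" using Lp d_def by (simp add: field_simps)
          ultimately show ?thesis by simp
        qed
        then have "((lam - real g / N) / L) ^ (g-1) \<ge> (1 - 3 * d) ^ (g-1)"
          using d6 by (intro power_mono) auto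
        moreover have "(1 - 3 * d) ^ (g-1) \<ge> 1 - real (g-1) * (3 * d)"
          using Bernoulli_inequality[of "- (3 * d)" "g-1"] d6 by simp
        ultimately have e1: "((lam - real g / N) / L) ^ (g-1) \<ge> 1 - real (g-1) * (3 * d)" by simp
        have k1: "real (g-1) * (3 * d) \<le> 1/2"
        proof -
          have "real (g-1) * (3 * d) \<le> real g * (3 * d)" using dp by (intro mult_right_mono) auto
          then show ?thesis using c6' by (simp add: algebra_simps)
        qed
        have "\<rho> \<ge> (1 - real (g-1) * (3 * d)) * (1 - d)" unfolding \<rho>_def
          using e1 e2 k1 d6 by (intro mult_mono) auto
        also have "(1 - real (g-1) * (3 * d)) * (1 - d) \<ge> 1 - k * d"
        proof -
          have "(1 - real (g-1) * (3 * d)) * (1 - d) = 1 - real (g-1) * (3 * d) - d + real (g-1) * (3 * d) * d"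
            by (simp add: algebra_simps)
          moreover have "real (g-1) * (3 * d) * d \<ge> 0" using dp by simp
          moreover have "real (g-1) * (3 * d) + d \<le> k * d" using g1 dp unfolding k_def
            by (simp add: of_nat_diff algebra_simps)
          ultimately show ?thesis by linarith
        qed
        finally have rho: "\<rho> \<ge> 1 - k * d" .
        have kd: "k * d \<le> 1/2" using c6 unfolding k_def d_def l_def L_def N_def by simp
        have "x * (1 - k * d) \<le> x * \<rho>" using rho xnn by (intro mult_left_mono) auto
        then have "N * bterm n t (g-1) \<ge> x * (1 - k * d)" using Ns1 by linarith
        then have "exp (- (N * bterm n t (g-1))) \<le> exp (- (x * (1 - k * d)))" by simp
        also have "\<dots> = exp (- x) * exp (k * d * x)" by (simp add: mult_exp_exp algebra_simps)
        also have "\<dots> \<le> exp (- x) * (1 + k * d * x * exp (k * d * x))"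
          using exp_sub1_le[of "k * d * x"] dp xnn g1 k_def by (intro mult_left_mono) auto
        also have "\<dots> = exp (- x) + k * d * (x * exp (- (x * (1 - k * d))))"
          by (simp add: algebra_simps mult_exp_exp)
        finally have A: "exp (- (N * bterm n t (g-1))) \<le> exp (- x) + k * d * (x * exp (- (x * (1 - k * d))))" .
        have B1: "x * exp (- (x * (1 - k * d))) \<le> x * exp (- x / 2)"
        proof -
          have "x * (1/2) \<le> x * (1 - k * d)" using kd xnn by (intro mult_left_mono) auto
          then have "exp (- (x * (1 - k * d))) \<le> exp (- x / 2)" by simp
          then show ?thesis using xnn by (intro mult_left_mono) auto
        qed
        have B2: "x * exp (- x / 2) \<le> 1" using x_exp_le xnn by simp
        have kd0: "0 \<le> k * d" using dp k_def by simp
        have "k * d * (x * exp (- (x * (1 - k * d)))) \<le> k * d * 1"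
          using B1 B2 kd0 by (intro mult_left_mono) auto
        then have "exp (- (N * bterm n t (g-1))) \<le> exp (- x) + k * d" using A by linarith
        also have "\<dots> < exp (- x) + C * d" using dp C_def by simp
        finally show ?thesis using s1nn sQ1 by blast
      qed
    qed
  qed
  then obtain s where s: "0 \<le> s" "s \<le> 1 - Q n t g" "exp (- (N * s)) < exp (- x) + C * d" by blast
  have "1 - exp (- x) + (- C * d) < 1 - exp (- (N * s))" using s by simp
  also have "\<dots> \<le> measure_pmf.prob (packets_pmf n g t :: (nat \<times> (nat \<Rightarrow> 'a::{field,finite})) list pmf) {xs. decoding_fails n g xs}"
    using fl s by simp
  finally show ?thesis unfolding rhs unfolding C_def k_def d_def l_def L_def N_def by simp
qed



theorem theorem6:
  fixes g :: nat
  assumes "g \<ge> 1"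
  shows "\<exists>e :: nat \<Rightarrow> real. e \<in> O(\<lambda>n. ln (ln (real n)) / ln (real n)) \<and>
    (\<forall>\<^sub>F n in at_top. \<forall>t :: nat.
       measure_pmf.prob (packets_pmf n g t :: (nat \<times> (nat \<Rightarrow> 'a::{field,finite})) list pmf)
                        {xs. decoding_fails n g xs}
       > 1 - exp (- (1 / fact (g - 1)) * real n * ln (real n) ^ (g - 1) * exp (- (real t / real n))) + e n)"
proof (intro exI conjI)
  define c :: real where "c = - (3 * real g + 2)"
  have c0: "c \<noteq> 0" unfolding c_def by simp
  show "(\<lambda>n::nat. c * (ln (ln (real n)) / ln (real n))) \<in> O(\<lambda>n. ln (ln (real n)) / ln (real n))"
    by (intro bigoI[where c="\<bar>c\<bar>"] always_eventually allI) (simp add: abs_mult)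
  define K :: real where "K = ln (fact (g-1)) + ln (2 * 3^(g-1))"
  have ev: "\<forall>\<^sub>F x in at_top. 1 \<le> ln (ln x) \<and> ln (ln x) \<le> exp (ln x / 4) \<and>
       (ln x + real g * ln (ln x)) / (x - 1) \<le> ln (ln x) / ln x \<and>
       3 * real g * (ln (ln x) / ln x) \<le> 1/2 \<and> K + ln (ln (ln x)) \<le> 2 * ln (ln (x::real))"
    by (intro eventually_conj; real_asymp)
  have ev2: "\<forall>\<^sub>F n in at_top. 1 \<le> ln (ln (real n)) \<and> ln (ln (real n)) \<le> exp (ln (real n) / 4) \<and>
       (ln (real n) + real g * ln (ln (real n))) / (real n - 1) \<le> ln (ln (real n)) / ln (real n) \<and>
       3 * real g * (ln (ln (real n)) / ln (real n)) \<le> 1/2 \<and> K + ln (ln (ln (real n))) \<le> 2 * ln (ln (real n))"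
    using eventually_compose_filterlim[OF ev filterlim_real_sequentially] by simp
  show "\<forall>\<^sub>F n in at_top. \<forall>t :: nat.
       measure_pmf.prob (packets_pmf n g t :: (nat \<times> (nat \<Rightarrow> 'a::{field,finite})) list pmf)
                        {xs. decoding_fails n g xs}
       > 1 - exp (- (1 / fact (g - 1)) * real n * ln (real n) ^ (g - 1) * exp (- (real t / real n))) + c * (ln (ln (real n)) / ln (real n))"
    using ev2 eventually_ge_at_top[of 3] eventually_ge_at_top[of g]
  proof eventually_elim
    case (elim n)
    show ?case
    proof
      fix t
      show "measure_pmf.prob (packets_pmf n g t :: (nat \<times> (nat \<Rightarrow> 'a::{field,finite})) list pmf)
                        {xs. decoding_fails n g xs}
       > 1 - exp (- (1 / fact (g - 1)) * real n * ln (real n) ^ (g - 1) * exp (- (real t / real n))) + c * (ln (ln (real n)) / ln (real n))"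
        using core[of g n t, where 'a='a] elim assms unfolding c_def K_def by (simp add: add.assoc)
    qed
  qed
qed


end
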